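(* Let $p\in(1,2]$, $\nu\ge2$, and $a_1,\dots,a_\nu\ge0$. Then \[\Big(\sum_{i=1}^\nu a_i\Big)^p-\sum_{i=1}^\nu a_i^p\le\sum_{1\le i<j\le\nu}\big[(a_i+a_j)^p-a_i^p-a_j^p\big].\] *)

theory Defs
  imports Complex_Main
begin

end

theory Submission
  imports Defs "HOL-Analysis.Analysis"
begin

lemma powr_concave:
  assumes "0 \<le> q" "q \<le> 1"
  shows "convex_on {0<..} (\<lambda>x::real. - (x powr q))"
proof (rule f''_ge0_imp_convex[where f' = "\<lambda>x. - (q * x powr (q - 1))"
      and f'' = "\<lambda>x. - (q * ((q - 1) * x powr (q - 1 - 1)))"])
  fix x :: real assume "x \<in> {0<..}"
  then have x: "x > 0" by simp
  show "DERIV (\<lambda>x. - (x powr q)) x :> - (q * x powr (q - 1))"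
    using has_real_derivative_powr[OF x] by (intro derivative_intros) auto
  show "DERIV (\<lambda>x. - (q * x powr (q - 1))) x :> - (q * ((q - 1) * x powr (q - 1 - 1)))"
    using DERIV_cmult[OF has_real_derivative_powr[OF x, of "q - 1"], of q]
    by (intro derivative_intros) (auto simp: algebra_simps)
  have "q * ((q - 1) * x powr (q - 1 - 1)) \<le> 0"
    using assms x by (intro mult_nonneg_nonpos mult_nonpos_nonneg) auto
  then show "0 \<le> - (q * ((q - 1) * x powr (q - 1 - 1)))" by simp
qed auto

lemma incr_dec:
  fixes u :: "real \<Rightarrow> real"
  assumes cv: "convex_on {0<..} (\<lambda>x. - u x)" and s: "0 < s" "s \<le> t" and d: "0 \<le> d"
  shows "u (t + d) - u t \<le> u (s + d) - u s"
proof (cases "s = t \<or> d = 0")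
  case True then show ?thesis by auto
next
  case False
  then have st: "s < t" and d: "d > 0" using s d by auto
  define L where "L = t + d - s"
  have L: "L > 0" using st d by (simp add: L_def)
  define l where "l = (t - s) / L"
  have l0: "0 \<le> l" "l \<le> 1" using L st d by (auto simp: l_def L_def field_simps)
  have lL: "l * L = t - s" using L by (simp add: l_def)
  have e1: "(1 - l) *\<^sub>R s + l *\<^sub>R (t + d) = t"
    using lL by (simp add: L_def algebra_simps)
  have e2: "(1 - (1 - l)) *\<^sub>R s + (1 - l) *\<^sub>R (t + d) = s + d"
    using lL by (simp add: L_def algebra_simps)
  have "- u ((1 - l) *\<^sub>R s + l *\<^sub>R (t + d)) \<le> (1 - l) * - u s + l * - u (t + d)"
    using convex_onD[OF cv, of l s "t + d"] l0 s d by auto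
  moreover have "- u ((1 - (1 - l)) *\<^sub>R s + (1 - l) *\<^sub>R (t + d)) \<le> (1 - (1 - l)) * - u s + (1 - l) * - u (t + d)"
    using convex_onD[OF cv, of "1 - l" s "t + d"] l0 s d by auto
  ultimately show ?thesis unfolding e1 e2 by (simp add: algebra_simps)
qed

lemma four_ineq:
  fixes p x y a :: real
  assumes p: "1 < p" "p \<le> 2" and x: "0 \<le> x" and y: "0 \<le> y" and a: "0 \<le> a"
  shows "(x + y + a) powr p + x powr p + y powr p + a powr p
         \<le> (x + y) powr p + (x + a) powr p + (y + a) powr p"
proof -
  define \<Phi> where "\<Phi> = (\<lambda>z::real. (z + y) powr p + (z + a) powr p + (y + a) powr p
     - (z + y + a) powr p - z powr p - y powr p - a powr p)"
  have "\<Phi> 0 = 0" using p by (simp add: \<Phi>_def)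
  have "\<Phi> x \<ge> 0"
  proof (cases "x = 0")
    case True then show ?thesis using \<open>\<Phi> 0 = 0\<close> by simp
  next
    case False
    then have xp: "0 < x" using x by simp
    have cont: "continuous_on {0..x} \<Phi>"
      unfolding \<Phi>_def using p y a
      by (intro continuous_intros continuous_on_powr') auto
    have der: "DERIV \<Phi> z :> p * ((z + y) powr (p - 1) + (z + a) powr (p - 1)
                 - (z + y + a) powr (p - 1) - z powr (p - 1))" if z: "0 < z" for z
      unfolding \<Phi>_def using z y a
      by (auto intro!: derivative_eq_intros simp: algebra_simps)
    obtain l z where z: "0 < z" "z < x" and dz: "DERIV \<Phi> z :> l" and eq: "\<Phi> x - \<Phi> 0 = (x - 0) * l"
    proof -
      have "\<And>w. 0 < w \<Longrightarrow> w < x \<Longrightarrow> \<Phi> differentiable (at w)"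
        using der real_differentiable_def by blast
      from MVT[OF xp cont this] show ?thesis using that by blast
    qed
    have l: "l = p * ((z + y) powr (p - 1) + (z + a) powr (p - 1)
                 - (z + y + a) powr (p - 1) - z powr (p - 1))"
      using DERIV_unique[OF dz der[OF z(1)]] .
    have "(z + y + a) powr (p - 1) - (z + y) powr (p - 1) \<le> (z + a) powr (p - 1) - z powr (p - 1)"
      using incr_dec[OF powr_concave[of "p - 1"], of z "z + y" a] p z y a by auto
    then have "l \<ge> 0" unfolding l using p by (intro mult_nonneg_nonneg) auto
    then show ?thesis using eq \<open>\<Phi> 0 = 0\<close> xp by simp
  qed
  then show ?thesis by (simp add: \<Phi>_def)
qed

lemma subadd_sum:
  fixes p b :: real and x :: "nat \<Rightarrow> real"
  assumes p: "1 < p" "p \<le> 2" and b: "0 \<le> b" and fin: "finite A"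
    and x: "\<And>i. i \<in> A \<Longrightarrow> 0 \<le> x i"
  shows "(sum x A + b) powr p - sum x A powr p - b powr p
         \<le> (\<Sum>i\<in>A. (x i + b) powr p - x i powr p - b powr p)"
  using fin x
proof (induction A rule: finite_induct)
  case empty then show ?case using p by simp
next
  case (insert k A)
  have xk: "0 \<le> x k" and xA: "0 \<le> sum x A" using insert by (auto intro: sum_nonneg)
  have "(x k + sum x A + b) powr p + x k powr p + sum x A powr p + b powr p
         \<le> (x k + sum x A) powr p + (x k + b) powr p + (sum x A + b) powr p"
    using four_ineq[OF p xk xA b] .
  moreover have "(sum x A + b) powr p - sum x A powr p - b powr p
         \<le> (\<Sum>i\<in>A. (x i + b) powr p - x i powr p - b powr p)"
    using insert by auto
  ultimately show ?case using insert by (simp add: algebra_simps)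
qed

lemma main_gen:
  fixes p :: real and n :: nat and a :: "nat \<Rightarrow> real"
  assumes p: "1 < p" "p \<le> 2"
    and "\<And>i. i \<in> {1..n} \<Longrightarrow> a i \<ge> 0"
  shows "(\<Sum>i=1..n. a i) powr p - (\<Sum>i=1..n. a i powr p)
         \<le> (\<Sum>(i,j)\<in>{(i,j). 1 \<le> i \<and> i < j \<and> j \<le> n}.
               (a i + a j) powr p - a i powr p - a j powr p)"
  using assms(3)
proof (induction n)
  case 0
  have e: "{(i,j). 1 \<le> i \<and> i < j \<and> j \<le> (0::nat)} = {}" by auto
  show ?case unfolding e using p by simp
next
  case (Suc n)
  define b where "b = a (Suc n)"
  have b: "0 \<le> b" using Suc.prems by (simp add: b_def)
  have IH: "(\<Sum>i=1..n. a i) powr p - (\<Sum>i=1..n. a i powr p)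
         \<le> (\<Sum>(i,j)\<in>{(i,j). 1 \<le> i \<and> i < j \<and> j \<le> n}.
               (a i + a j) powr p - a i powr p - a j powr p)"
    using Suc by auto
  have set: "{(i,j). 1 \<le> i \<and> i < j \<and> j \<le> Suc n}
     = {(i,j). 1 \<le> i \<and> i < j \<and> j \<le> n} \<union> (\<lambda>i. (i, Suc n)) ` {1..n}" by auto
  have fin: "finite {(i,j). 1 \<le> i \<and> i < j \<and> j \<le> (n::nat)}"
    by (rule finite_subset[of _ "{1..n} \<times> {1..n}"]) auto
  have disj: "{(i,j). 1 \<le> i \<and> i < j \<and> j \<le> n} \<inter> (\<lambda>i. (i, Suc n)) ` {1..n} = {}" by auto
  have Q: "(\<Sum>(i,j)\<in>{(i,j). 1 \<le> i \<and> i < j \<and> j \<le> Suc n}.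
               (a i + a j) powr p - a i powr p - a j powr p)
     = (\<Sum>(i,j)\<in>{(i,j). 1 \<le> i \<and> i < j \<and> j \<le> n}.
               (a i + a j) powr p - a i powr p - a j powr p)
       + (\<Sum>i=1..n. (a i + b) powr p - a i powr p - b powr p)"
    unfolding set using fin disj
    by (simp add: sum.union_disjoint sum.reindex inj_on_def b_def)
  have sub: "((\<Sum>i=1..n. a i) + b) powr p - (\<Sum>i=1..n. a i) powr p - b powr p
         \<le> (\<Sum>i=1..n. (a i + b) powr p - a i powr p - b powr p)"
    using subadd_sum[OF p b, of "{1..n}" a] Suc.prems by auto
  have S: "(\<Sum>i=1..Suc n. a i) = (\<Sum>i=1..n. a i) + b"
    and T: "(\<Sum>i=1..Suc n. a i powr p) = (\<Sum>i=1..n. a i powr p) + b powr p"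
    by (simp_all add: b_def)
  show ?case unfolding Q S T using IH sub by linarith
qed

theorem lemmaA5:
  fixes p :: real and \<nu> :: nat and a :: "nat \<Rightarrow> real"
  assumes "1 < p" and "p \<le> 2" and "\<nu> \<ge> 2"
    and "\<And>i. i \<in> {1..\<nu>} \<Longrightarrow> a i \<ge> 0"
  shows "(\<Sum>i=1..\<nu>. a i) powr p - (\<Sum>i=1..\<nu>. a i powr p)
         \<le> (\<Sum>(i,j)\<in>{(i,j). 1 \<le> i \<and> i < j \<and> j \<le> \<nu>}.
               (a i + a j) powr p - a i powr p - a j powr p)"
  using main_gen[OF assms(1,2), of \<nu> a] assms(4) by blast

end
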